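(* Let $\alpha,\beta>-1$, $n\ge1$, and let $d_{k,n}$, $0\le k\le n$, be as defined below. Then for every integer $k\ge0$ with $k+2\le n$, $$d_{k,n}=\frac{2(\alpha-\beta)(k+1)}{n(n+\alpha+\beta+1)-k^2-(\alpha+\beta+1)k}\,d_{k+1,n}+\frac{n(n+\alpha+\beta+1)-(k+2)^2+(\alpha+\beta+1)(k+2)}{n(n+\alpha+\beta+1)-k^2-(\alpha+\beta+1)k}\,d_{k+2,n},$$ and $$d_{n,n}=\frac{\Gamma(2n+\alpha+\beta+1)}{2^{2n}\Gamma(n+\alpha+\beta+1)\Gamma(n+1)},\qquad d_{n-1,n}=\frac{(\alpha-\beta)\Gamma(2n+\alpha+\beta)}{2^{2n-1}\Gamma(n+\alpha+\beta+1)\Gamma(n)}.$$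
   Context: For $\alpha,\beta>-1$ and $0\le k\le n$, $d_{k,n}=\frac{(n+\alpha+\beta+1)_k(k+\alpha+1)_{n-k}}{(n-k)!\,2^{2k}\Gamma(k+1)}\,{}_3F_2\!\left[\begin{matrix}k-n,\ n+k+\alpha+\beta+1,\ k+\frac12\\ k+\alpha+1,\ 2k+1\end{matrix};1\right]$, with $(a)_k$ the Pochhammer symbol and ${}_3F_2$ the generalized hypergeometric series. Equivalently, these are the coefficients in the Chebyshev expansion $P_n^{(\alpha,\beta)}(x)=d_{0,n}+2\sum_{k=1}^n d_{k,n}T_k(x)$, where $P_n^{(\alpha,\beta)}$ is the Jacobi polynomial and $T_k(\cos\theta)=\cos k\theta$. *)

theory Defs
  imports "HOL-Analysis.Analysis"
begin

text \<open>Generalized hypergeometric series 3F2 as a formal series (sum of the power series);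
  for a nonpositive integer upper parameter it terminates.\<close>
definition hyp3F2 :: "real \<Rightarrow> real \<Rightarrow> real \<Rightarrow> real \<Rightarrow> real \<Rightarrow> real \<Rightarrow> real" where
  "hyp3F2 a1 a2 a3 b1 b2 z =
     (\<Sum>j. pochhammer a1 j * pochhammer a2 j * pochhammer a3 j
            / (pochhammer b1 j * pochhammer b2 j) * z ^ j / fact j)"

text \<open>The Chebyshev coefficients d_{k,n} of the Jacobi polynomial.\<close>
definition dcoef :: "real \<Rightarrow> real \<Rightarrow> nat \<Rightarrow> nat \<Rightarrow> real" where
  "dcoef \<alpha> \<beta> k n =
     pochhammer (real n + \<alpha> + \<beta> + 1) k * pochhammer (real k + \<alpha> + 1) (n - k)
     / (fact (n - k) * 2 ^ (2 * k) * Gamma (real k + 1))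
     * hyp3F2 (real k - real n) (real n + real k + \<alpha> + \<beta> + 1) (real k + 1 / 2)
              (real k + \<alpha> + 1) (2 * real k + 1) 1"

end

theory Submission
  imports Defs
begin

lemma fact_add_poch: "(fact (m + j) :: real) = fact m * pochhammer (real m + 1) j"
proof -
  have "(fact (m + j) :: real) = pochhammer 1 (m+j)" by (rule pochhammer_fact)
  also have "\<dots> = pochhammer 1 m * pochhammer (1 + real m) j" by (rule pochhammer_product')
  finally show ?thesis by (simp add: pochhammer_fact add.commute)
qed

lemma poch_neg_fact:
  assumes "j \<le> m"
  shows "pochhammer (- real m) j * fact (m - j) = (-1)^j * (fact m :: real)"
proof -
  have "pochhammer (- real m) j = (-1)^j * pochhammer (real m - real j + 1) j"
    by (simp add: pochhammer_minus)
  moreover have "fact m = (fact (m - j) :: real) * pochhammer (real (m - j) + 1) j"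
    using fact_add_poch[of "m-j" j] assms by simp
  ultimately show ?thesis using assms by (simp add: of_nat_diff)
qed

lemma hyp_finite:
  assumes "k \<le> n"
  shows "hyp3F2 (real k - real n) a2 a3 b1 b2 1 =
    (\<Sum>j\<le>n-k. pochhammer (real k - real n) j * pochhammer a2 j * pochhammer a3 j
            / (pochhammer b1 j * pochhammer b2 j) / fact j)"
proof -
  have e: "real k - real n = - real (n - k)" using assms by (simp add: of_nat_diff)
  show ?thesis unfolding hyp3F2_def
    by (subst suminf_finite[where N="{..n-k}"]) (auto simp: e pochhammer_of_nat_eq_0_iff)
qed

definition Aco :: "real \<Rightarrow> real \<Rightarrow> nat \<Rightarrow> nat \<Rightarrow> real" where
  "Aco a b n i = pochhammer (real n + a + b + 1) i * pochhammer (real i + a + 1) (n - i)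
     * pochhammer (1/2) i / fact (n - i)"

lemma alg:
  fixes p1 r1 r2 fm fk fmj q1 h1 h2 f2 fj c s :: real
  assumes "r1\<noteq>0" "f2\<noteq>0" "h1\<noteq>0" "fm\<noteq>0" "fk\<noteq>0" "fmj\<noteq>0" "fj\<noteq>0" "c \<noteq> 0"
  shows "p1 * (r1*r2) / (fm * c * fk) * ((s * fm / fmj) * q1 * h2 / (r1 * f2) / fj)
     = s * (p1*q1 * r2 * (h1*h2) / fmj) / ((c*h1*fk * f2) * fj)"
  using assms by (simp add: field_simps)

lemma term_eq:
  assumes "a > -1" and "k \<le> n" and "j \<le> n - k"
  shows "pochhammer (real n + a + b + 1) k * pochhammer (real k + a + 1) (n - k)
     / (fact (n - k) * 2 ^ (2 * k) * Gamma (real k + 1)) *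
     (pochhammer (real k - real n) j * pochhammer (real n + real k + a + b + 1) j * pochhammer (real k + 1 / 2) j
            / (pochhammer (real k + a + 1) j * pochhammer (2 * real k + 1) j) / fact j)
   = (-1)^(k+j-k) * Aco a b n (k+j) / (fact (k+j+k) * fact (k+j-k))"
proof -
  define m where "m = n - k"
  have n: "n = k + m" using assms m_def by simp
  have jm: "j \<le> m" using assms m_def by simp
  define x where "x = real n + a + b + 1"
  have e1: "pochhammer x (k+j) = pochhammer x k * pochhammer (real n + real k + a + b + 1) j"
    unfolding x_def pochhammer_product' by (simp add: add_ac)
  have e2: "pochhammer (real k + a + 1) m = pochhammer (real k + a + 1) j * pochhammer (real (k+j) + a + 1) (n - (k+j))"
  proof -
    have "pochhammer (real k + a + 1) m = pochhammer (real k + a + 1) (j + (m-j))" using jm by simp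
    also have "\<dots> = pochhammer (real k + a + 1) j * pochhammer (real (k+j) + a + 1) (m-j)"
      unfolding pochhammer_product' by (simp add: add_ac)
    finally show ?thesis using n by simp
  qed
  have e3: "pochhammer (1/2::real) (k+j) = pochhammer (1/2) k * pochhammer (real k + 1/2) j"
    unfolding pochhammer_product' by (simp add: add_ac)
  have e4: "(fact (k+j+k) :: real) = fact (2*k) * pochhammer (2 * real k + 1) j"
  proof -
    have h: "k+j+k = 2*k+j" by simp
    have h2: "real (2*k) = 2*real k" by simp
    show ?thesis unfolding h using fact_add_poch[of "2*k" j] unfolding h2 .
  qed
  have e5: "(fact (2*k) :: real) = 2^(2*k) * pochhammer (1/2) k * fact k" by (rule fact_double)
  have e6: "pochhammer (real k - real n) j = (-1)^j * fact m / fact (m - j)"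
  proof -
    have "pochhammer (real k - real n) j = pochhammer (- real m) j" using n by simp
    thus ?thesis using poch_neg_fact[OF jm] by (simp add: eq_divide_eq)
  qed
  have e7: "Gamma (real k + 1) = fact k" using Gamma_fact[of k] by (simp add: add.commute)
  have nz1: "pochhammer (real k + a + 1) j \<noteq> 0"
    using pochhammer_pos[of "real k + a + 1" j] assms(1) by simp
  have nz2: "pochhammer (2 * real k + 1) j \<noteq> 0"
    using pochhammer_pos[of "2 * real k + 1" j] by simp
  have nz3: "pochhammer (1/2::real) k \<noteq> 0"
    using pochhammer_pos[of "1/2::real" k] by simp
  have nm: "n - (k + j) = m - j" using n by simp
  have L: "?thesis \<longleftrightarrow> pochhammer x k * (pochhammer (real k + a + 1) j * pochhammer (real (k+j) + a + 1) (m - j))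
     / (fact m * 2 ^ (2 * k) * fact k) *
     (((-1)^j * fact m / fact (m - j)) * pochhammer (real n + real k + a + b + 1) j * pochhammer (real k + 1 / 2) j
            / (pochhammer (real k + a + 1) j * pochhammer (2 * real k + 1) j) / fact j)
   = (-1)^j * (pochhammer x k * pochhammer (real n + real k + a + b + 1) j * pochhammer (real (k+j) + a + 1) (m - j) * (pochhammer (1/2) k * pochhammer (real k + 1/2) j) / fact (m - j))
      / ((2^(2*k) * pochhammer (1/2) k * fact k * pochhammer (2 * real k + 1) j) * fact j)"
    unfolding Aco_def x_def[symmetric] e1 e3 e4 e5 e7 e6 m_def[symmetric] e2 nm add_diff_cancel_left'
    by (rule refl)
  show ?thesis unfolding L
    by (rule alg) (use nz1 nz2 nz3 in auto)
qed

definition dsum :: "real \<Rightarrow> real \<Rightarrow> nat \<Rightarrow> nat \<Rightarrow> real" where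
  "dsum a b n k = (\<Sum>i=k..n. (-1)^(i-k) * Aco a b n i / (fact (i+k) * fact (i-k)))"

lemma dcoef_sum:
  assumes "a > -1" and "k \<le> n"
  shows "dcoef a b k n = dsum a b n k"
proof -
  have "dcoef a b k n = (\<Sum>j\<le>n-k. (-1)^(k+j-k) * Aco a b n (k+j) / (fact (k+j+k) * fact (k+j-k)))"
    unfolding dcoef_def hyp_finite[OF assms(2)] sum_distrib_left
    by (rule sum.cong) (use term_eq[OF assms] in auto)
  also have "\<dots> = dsum a b n k"
  proof -
    have "(\<Sum>j\<le>n-k. (-1)^(k+j-k) * Aco a b n (k+j) / (fact (k+j+k) * fact (k+j-k)))
       = (\<Sum>j=0..n-k. (\<lambda>i. (-1)^(i-k) * Aco a b n i / (fact (i+k) * fact (i-k))) (j+k))"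
      by (simp add: atMost_atLeast0 add.commute)
    also have "\<dots> = (\<Sum>i=0+k..n-k+k. (-1)^(i-k) * Aco a b n i / (fact (i+k) * fact (i-k)))"
      by (rule sum.shift_bounds_cl_nat_ivl[symmetric])
    finally show ?thesis using assms(2) by (simp add: dsum_def)
  qed
  finally show ?thesis .
qed

lemma Arec:
  assumes "i < n"
  shows "Aco a b n (Suc i) * (real i + a + 1) =
    Aco a b n i * ((real n + a + b + 1 + real i) * (real i + 1/2) * (real n - real i))"
proof -
  define t where "t = n - Suc i"
  have t: "n - i = Suc t" using assms t_def by simp
  define x where "x = real n + a + b + 1"
  define P where "P = pochhammer (real (Suc i) + a + 1) t"
  define F where "F = (fact t :: real)"
  define R where "R = pochhammer (1/2::real) i"
  define X where "X = pochhammer x i"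
  have p3: "pochhammer (real i + a + 1) (n-i) = (real i + a + 1) * P"
    unfolding t pochhammer_rec P_def by (simp add: add_ac)
  define T where "T = real t + 1"
  have p4: "(fact (n-i) :: real) = T * F" unfolding t F_def T_def by simp
  have p5: "real n - real i = T" using t assms unfolding T_def by (simp add: of_nat_diff)
  have lhs: "Aco a b n (Suc i) = X * (x + real i) * P * (R * (1/2 + real i)) / F"
    unfolding Aco_def x_def[symmetric] X_def R_def pochhammer_Suc P_def F_def t_def by simp
  have rhs: "Aco a b n i = X * ((real i + a + 1) * P) * R / (T * F)"
    unfolding Aco_def x_def[symmetric] X_def R_def p3 p4 by simp
  have F0: "F \<noteq> 0" unfolding F_def by simp
  have t0: "T \<noteq> 0" unfolding T_def by simp
  show ?thesis unfolding lhs rhs p5 x_def[symmetric] using F0 t0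
    by (simp add: field_simps)
qed

lemma cancel1:
  fixes x F G c :: real
  assumes "c \<noteq> 0" shows "x / (F*G) = x / ((F*c)*G) * c"
  using assms by (cases "F = 0"; cases "G = 0") (simp_all add: field_simps)

lemma term1:
  "(-1)^(i-k) * A / (fact (i+k) * fact (i-k)) =
   (-1)^(i-k) * A / (fact (i+k+2) * fact (i-k)) * ((real i + real k + 1) * (real i + real k + 2))"
proof -
  define F where "F = (fact (i+k) :: real)"
  define G where "G = (fact (i-k) :: real)"
  have f: "(fact (i+k+2) :: real) = F * ((real i + real k + 1) * (real i + real k + 2))"
    unfolding F_def by (simp add: algebra_simps numeral_2_eq_2)
  have "(real i + real k + 1) * (real i + real k + 2) \<noteq> 0"
    by (simp add: add_pos_pos del: of_nat_add) 
  then show ?thesis unfolding f F_def[symmetric] G_def[symmetric] by (rule cancel1)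
qed

lemma cancel2:
  fixes s A F G c T :: real
  assumes "c \<noteq> 0" "T \<noteq> 0" shows "s * A / (F*G) = - s * A / ((F*c)*(G*T)) * (- c * T)"
  using assms by (cases "F = 0"; cases "G = 0") (simp_all add: field_simps)

lemma term2:
  assumes "k < i"
  shows "(-1)^(i-(k+1)) * A / (fact (i+(k+1)) * fact (i-(k+1))) =
   (-1)^(i-k) * A / (fact (i+k+2) * fact (i-k)) * (-(real i + real k + 2) * (real i - real k))"
proof -
  define t where "t = i - (k+1)"
  have ik: "i - k = Suc t" using assms t_def by simp
  define F where "F = (fact (i+(k+1)) :: real)"
  define G where "G = (fact t :: real)"
  have f1: "(fact (i+k+2) :: real) = F * (real i + real k + 2)"
    unfolding F_def by (simp add: algebra_simps numeral_2_eq_2)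
  have f2: "(fact (i-k) :: real) = G * (real t + 1)" unfolding ik G_def by simp
  have s: "(-1::real)^(i-k) = - ((-1)^t)" unfolding ik by simp
  have d: "real i - real k = real t + 1" using ik assms by (simp add: of_nat_diff)
  show ?thesis unfolding f1 f2 s d F_def[symmetric] t_def[symmetric] G_def[symmetric]
    by (rule cancel2) (simp_all add: add_pos_pos del: of_nat_add)
qed

lemma cancel3:
  fixes s A F G U V :: real
  assumes "U \<noteq> 0" "V \<noteq> 0" shows "s * A / (F*G) = s * A / (F*(G*(U*V))) * (V * U)"
  using assms by (cases "F = 0"; cases "G = 0") (simp_all add: field_simps)

lemma term3:
  assumes "k + 1 < i"
  shows "(-1)^(i-(k+2)) * A / (fact (i+(k+2)) * fact (i-(k+2))) =
   (-1)^(i-k) * A / (fact (i+k+2) * fact (i-k)) * ((real i - real k) * (real i - real k - 1))"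
proof -
  define t where "t = i - (k+2)"
  have ik: "i - k = Suc (Suc t)" using assms t_def by simp
  define G where "G = (fact t :: real)"
  have f1: "i+(k+2) = i+k+2" by simp
  have f2: "(fact (i-k) :: real) = G * ((real t + 1) * (real t + 2))" unfolding ik G_def 
    by (simp add: algebra_simps)
  have s: "(-1::real)^(i-k) = (-1)^t" unfolding ik by simp
  have d: "real i - real k = real t + 2" using ik assms by (simp add: of_nat_diff)
  have d2: "real t + 2 - 1 = real t + 1" by simp
  show ?thesis unfolding f1 f2 s d d2 t_def[symmetric] G_def[symmetric]
    by (rule cancel3) (simp_all add: add_pos_pos del: of_nat_add)
qed

definition Hf :: "real \<Rightarrow> real \<Rightarrow> nat \<Rightarrow> nat \<Rightarrow> nat \<Rightarrow> real" where
  "Hf a b n k j = (if j \<le> n then -4*(real k+1)*(real j + a)*(-1)^(j-k)*Aco a b n j*(real j - real k)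
      / (fact (j+k+1) * fact (j-k)) else 0)"

lemma alg_t1:
  fixes sg A F c G K X ea dd :: real
  assumes "c \<noteq> 0"
  shows "sg*A/(F*c*G) * (K*(X + ea*c*dd)) = K*(sg*A*X/(F*c*G)) + K * ea * sg * A * dd / (F * G)"
  using assms by (cases "F = 0"; cases "G = 0") (simp_all add: field_simps)

lemma alg_t2:
  fixes Q e1 s A X T F c G :: real
  assumes "e1 \<noteq> 0" "T \<noteq> 0"
  shows "Q*e1*(-s)*(A*X/e1)*T/((F*c)*(T*G)) = -Q*(s*A*X/(F*c*G))"
  using assms by (cases "F = 0"; cases "G = 0"; cases "c = 0") (simp_all add: field_simps)

lemma poly_id:
  fixes a b n k i :: real
  shows "(n * (n + a + b + 1) - k^2 - (a + b + 1) * k) * ((i + k + 1) * (i + k + 2))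
     + 2*(a-b)*(k+1) * ((i + k + 2) * (i - k))
     - (n * (n + a + b + 1) - (k + 2)^2 + (a + b + 1) * (k + 2)) * ((i - k) * (i - k - 1))
   = 4*(k+1) * ((n + a + b + 1 + i) * (i + 1/2) * (n - i) + (i + a) * (i + k + 2) * (i - k))"
  by (simp add: field_simps power2_eq_square)

lemma tele:
  assumes "a > -1" "k \<le> i" "i \<le> n"
  shows "(-1)^(i-k) * Aco a b n i / (fact (i+k+2) * fact (i-k)) *
    ((real n * (real n + a + b + 1) - (real k)^2 - (a + b + 1) * real k) * ((real i + real k + 1) * (real i + real k + 2))
     + 2*(a-b)*(real k+1) * ((real i + real k + 2) * (real i - real k))
     - (real n * (real n + a + b + 1) - (real k + 2)^2 + (a + b + 1) * (real k + 2)) * ((real i - real k) * (real i - real k - 1)))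
   = Hf a b n k (Suc i) - Hf a b n k i"
proof -
  define t where "t = i - k"
  define X where "X = (real n + a + b + 1 + real i) * (real i + 1/2) * (real n - real i)"
  define F where "F = (fact (i+k+1) :: real)"
  define G where "G = (fact t :: real)"
  define A where "A = Aco a b n i"
  define sg where "sg = (-1::real)^t"
  define c where "c = real i + real k + 2"
  define Q where "Q = -4*(real k + 1)"
  have F0: "F \<noteq> 0" unfolding F_def by simp
  have G0: "G \<noteq> 0" unfolding G_def by simp
  have c0: "c \<noteq> 0" unfolding c_def by (simp add: add_pos_pos del: of_nat_add)
  have f1: "(fact (i+k+2) :: real) = F * c"
    unfolding F_def c_def by (simp add: algebra_simps numeral_2_eq_2)
  have Hi: "Hf a b n k i = Q * (real i + a) * sg * A * (real i - real k) / (F * G)"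
    unfolding Hf_def Q_def sg_def A_def F_def G_def t_def using assms by simp
  have HS: "Hf a b n k (Suc i) = -Q * (sg * A * X / (F * c * G))"
  proof (cases "i = n")
    case True
    then show ?thesis unfolding Hf_def X_def by simp
  next
    case False
    hence lt: "i < n" using assms by simp
    have e1: "real (Suc i) + a \<noteq> 0" using assms by simp
    have A': "Aco a b n (Suc i) = A * X / (real (Suc i) + a)"
      using Arec[OF lt, of a b] e1 unfolding A_def X_def by (simp add: field_simps)
    have sk: "Suc i - k = Suc t" using assms t_def by simp
    have T0: "real t + 1 \<noteq> 0" by simp
    have d: "real (Suc i) - real k = real t + 1" using assms t_def by (simp add: of_nat_diff)
    have fS: "(fact (Suc i + k + 1) :: real) = F * c" using f1 by simp
    have "Hf a b n k (Suc i) = Q * (real (Suc i) + a) * (- sg) * (A * X / (real (Suc i) + a)) * (real t + 1)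
        / ((F * c) * ((real t + 1) * G))"
    proof -
      have le: "Suc i \<le> n" using lt by simp
      have fT: "(fact (Suc t)::real) = (real t + 1) * G" unfolding G_def by simp
      have pw: "(-1::real)^(Suc t) = - sg" unfolding sg_def by simp
      show ?thesis unfolding Hf_def if_P[OF le] sk d fS A' fT pw Q_def by (rule refl)
    qed
    also have "\<dots> = -Q * (sg * A * X / (F * c * G))"
      by (rule alg_t2[OF e1 T0])
    finally show ?thesis .
  qed
  have P: "(real n * (real n + a + b + 1) - (real k)^2 - (a + b + 1) * real k) * ((real i + real k + 1) * (real i + real k + 2))
     + 2*(a-b)*(real k+1) * ((real i + real k + 2) * (real i - real k))
     - (real n * (real n + a + b + 1) - (real k + 2)^2 + (a + b + 1) * (real k + 2)) * ((real i - real k) * (real i - real k - 1))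
     = (-Q) * (X + (real i + a) * c * (real i - real k))"
    unfolding poly_id X_def c_def Q_def by (simp add: algebra_simps)
  show ?thesis unfolding P HS Hi f1 sg_def[symmetric] A_def[symmetric] t_def[symmetric] G_def[symmetric]
    unfolding alg_t1[OF c0] using F0 G0 c0 by (simp add: field_simps)
qed

lemma dsum_rec:
  assumes "a > -1" "k + 2 \<le> n"
  shows "(real n * (real n + a + b + 1) - (real k)^2 - (a + b + 1) * real k) * dsum a b n k =
     2*(a-b)*(real k+1) * dsum a b n (k+1)
     + (real n * (real n + a + b + 1) - (real k + 2)^2 + (a + b + 1) * (real k + 2)) * dsum a b n (k+2)"
proof -
  define D where "D = real n * (real n + a + b + 1) - (real k)^2 - (a + b + 1) * real k"
  define E where "E = real n * (real n + a + b + 1) - (real k + 2)^2 + (a + b + 1) * (real k + 2)"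
  define g where "g i = (-1)^(i-k) * Aco a b n i / (fact (i+k+2) * fact (i-k))" for i
  define c1 where "c1 i = (real i + real k + 1) * (real i + real k + 2)" for i
  define c2 where "c2 i = -(real i + real k + 2) * (real i - real k)" for i
  define c3 where "c3 i = (real i - real k) * (real i - real k - 1)" for i
  have kn: "k \<le> n" "Suc k \<le> n" using assms by auto
  have S1: "dsum a b n k = (\<Sum>i=k..n. g i * c1 i)"
    unfolding dsum_def
  proof (rule sum.cong)
    fix i
    show "(-1)^(i-k) * Aco a b n i / (fact (i+k) * fact (i-k)) = g i * c1 i"
      unfolding g_def c1_def by (rule term1)
  qed simp
  have S2: "dsum a b n (k+1) = (\<Sum>i=k..n. g i * c2 i)"
  proof -
    have "(\<Sum>i=k..n. g i * c2 i) = g k * c2 k + (\<Sum>i=Suc k..n. g i * c2 i)"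
      by (rule sum.atLeast_Suc_atMost[OF kn(1)])
    also have "g k * c2 k = 0" unfolding c2_def by simp
    also have "(\<Sum>i=Suc k..n. g i * c2 i) = (\<Sum>i=k+1..n. (-1)^(i-(k+1)) * Aco a b n i / (fact (i+(k+1)) * fact (i-(k+1))))"
    proof (rule sum.cong)
      fix i assume "i \<in> {k+1..n}" hence "k < i" by auto
      thus "g i * c2 i = (-1)^(i-(k+1)) * Aco a b n i / (fact (i+(k+1)) * fact (i-(k+1)))"
        unfolding g_def c2_def by (rule term2[symmetric])
    qed simp
    also have "\<dots> = dsum a b n (k+1)" unfolding dsum_def ..
    finally show ?thesis by simp
  qed
  have S3: "dsum a b n (k+2) = (\<Sum>i=k..n. g i * c3 i)"
  proof -
    have "(\<Sum>i=k..n. g i * c3 i) = g k * c3 k + (g (Suc k) * c3 (Suc k) + (\<Sum>i=Suc (Suc k)..n. g i * c3 i))"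
      by (simp only: sum.atLeast_Suc_atMost[OF kn(1)] sum.atLeast_Suc_atMost[OF kn(2)])
    also have "g k * c3 k = 0" unfolding c3_def by simp
    also have "g (Suc k) * c3 (Suc k) = 0" unfolding c3_def by simp
    also have "(\<Sum>i=Suc (Suc k)..n. g i * c3 i) = (\<Sum>i=k+2..n. (-1)^(i-(k+2)) * Aco a b n i / (fact (i+(k+2)) * fact (i-(k+2))))"
    proof (rule sum.cong)
      fix i assume "i \<in> {k+2..n}" hence "k + 1 < i" by auto
      thus "g i * c3 i = (-1)^(i-(k+2)) * Aco a b n i / (fact (i+(k+2)) * fact (i-(k+2)))"
        unfolding g_def c3_def by (rule term3[symmetric])
    qed simp
    also have "\<dots> = dsum a b n (k+2)" unfolding dsum_def ..
    finally show ?thesis by simp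
  qed
  have SB: "(\<Sum>i=k..n. D * (g i * c1 i) - 2*(a-b)*(real k+1) * (g i * c2 i) - E * (g i * c3 i)) = 0"
  proof -
    have "(\<Sum>i=k..n. D * (g i * c1 i) - 2*(a-b)*(real k+1) * (g i * c2 i) - E * (g i * c3 i))
        = (\<Sum>i=k..n. Hf a b n k (Suc i) - Hf a b n k i)"
    proof (rule sum.cong)
      fix i assume "i \<in> {k..n}"
      hence i: "k \<le> i" "i \<le> n" by auto
      show "D * (g i * c1 i) - 2*(a-b)*(real k+1) * (g i * c2 i) - E * (g i * c3 i)
          = Hf a b n k (Suc i) - Hf a b n k i"
      proof -
        have "D * (g i * c1 i) - 2*(a-b)*(real k+1) * (g i * c2 i) - E * (g i * c3 i)
          = g i * (D * c1 i + 2*(a-b)*(real k+1)*((real i+real k+2)*(real i-real k)) - E * c3 i)"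
          unfolding c2_def by (simp add: algebra_simps)
        also have "\<dots> = Hf a b n k (Suc i) - Hf a b n k i"
          unfolding g_def c1_def c3_def D_def E_def by (rule tele[OF assms(1) i])
        finally show ?thesis .
      qed
    qed simp
    also have "\<dots> = Hf a b n k (Suc n) - Hf a b n k k"
      by (rule sum_Suc_diff) (use kn in simp)
    also have "\<dots> = 0" unfolding Hf_def by simp
    finally show ?thesis .
  qed
  have "(\<Sum>i=k..n. D * (g i * c1 i) - 2*(a-b)*(real k+1) * (g i * c2 i) - E * (g i * c3 i))
     = D * dsum a b n k - 2*(a-b)*(real k+1) * dsum a b n (k+1) - E * dsum a b n (k+2)"
    unfolding S1 S2 S3 by (simp add: sum_subtractf sum_distrib_left)
  with SB show ?thesis unfolding D_def[symmetric] E_def[symmetric] by simp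
qed

lemma not_npi: "(z::real) > 0 \<Longrightarrow> z \<notin> \<int>\<^sub>\<le>\<^sub>0"
  using nonpos_Ints_nonpos by fastforce

lemma alg_top1:
  fixes P m a b H F c :: real
  assumes "H \<noteq> 0" "F \<noteq> 0" "c \<noteq> 0" "2*m+1 \<noteq> 0"
  shows "P * (m + a + 1) * H / (c * H * F) -
      P * ((m + 1 + a + b + 1) + m) * (H * (1/2 + m)) / ((2 * m + 1) * (c * H * F))
      = (a - b) * P / (2 * c * F)"
proof -
  define T where "T = 2*m+1"
  have T0: "T \<noteq> 0" using assms T_def by simp
  have e: "H * (1/2 + m) = (H/2) * T" unfolding T_def by (simp add: field_simps)
  have c: "Z * (W * T) / (T * Y) = Z * W / Y" for Z W Y :: real
    using T0 by (cases "Y = 0") (simp_all add: field_simps)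
  have "P * ((m + 1 + a + b + 1) + m) * (H * (1/2 + m)) / ((2 * m + 1) * (c * H * F))
      = P * ((m + 1 + a + b + 1) + m) * (H/2) / (c * H * F)"
    unfolding e T_def[symmetric] by (rule c)
  then show ?thesis using assms by (simp add: field_simps)
qed

lemma alg_top2:
  fixes G Gx c F :: real
  shows "G / Gx / (c * F) = G / (c * Gx * F)"
  by (simp add: divide_divide_eq_left ac_simps)

lemma dsum_top:
  assumes "a > -1" "b > -1" "n \<ge> 1"
  shows "dsum a b n n = Gamma (2 * real n + a + b + 1)
             / (2 ^ (2 * n) * Gamma (real n + a + b + 1) * Gamma (real n + 1))"
proof -
  define x where "x = real n + a + b + 1"
  have x0: "x > 0" unfolding x_def using assms by simp
  have "dsum a b n n = Aco a b n n / fact (2*n)" unfolding dsum_def by (simp add: mult_2)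
  also have "\<dots> = pochhammer x n * pochhammer (1/2) n / (2 ^ (2 * n) * pochhammer (1/2) n * fact n)"
    unfolding Aco_def fact_double x_def by simp
  also have "\<dots> = pochhammer x n / (2 ^ (2 * n) * fact n)"
    using pochhammer_pos[of "1/2::real" n] by (simp add: field_simps)
  also have "pochhammer x n = Gamma (x + real n) / Gamma x"
    by (rule pochhammer_Gamma[OF not_npi[OF x0]])
  also have "x + real n = 2 * real n + a + b + 1" unfolding x_def by simp
  also have "(fact n :: real) = Gamma (real n + 1)" using Gamma_fact[of n, where 'a=real] by (simp add: add.commute)
  also have "Gamma (2 * real n + a + b + 1) / Gamma x / (2 ^ (2 * n) * Gamma (real n + 1))
     = Gamma (2 * real n + a + b + 1) / (2 ^ (2 * n) * Gamma x * Gamma (real n + 1))"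
    by (rule alg_top2)
  finally show ?thesis unfolding x_def .
qed

lemma dsum_top1:
  assumes "a > -1" "b > -1" "n \<ge> 1"
  shows "dsum a b n (n-1) = (a - b) * Gamma (2 * real n + a + b)
             / (2 ^ (2 * n - 1) * Gamma (real n + a + b + 1) * Gamma (real n))"
proof -
  obtain m where n: "n = Suc m" using assms(3) by (cases n) auto
  define x where "x = real n + a + b + 1"
  have x0: "x > 0" unfolding x_def using assms by simp
  have xm: "x = real m + 1 + a + b + 1" unfolding x_def n by simp
  define P where "P = pochhammer x m"
  define H where "H = pochhammer (1/2::real) m"
  define F where "F = (fact m :: real)"
  define c where "c = (2::real) ^ (2 * m)"
  have H0: "H > 0" unfolding H_def by (rule pochhammer_pos) simp
  have F0: "F > 0" unfolding F_def by simp
  have c0: "c > 0" unfolding c_def by simp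
  have "dsum a b n (n-1) = (\<Sum>i=m..Suc m. (-1)^(i-m) * Aco a b n i / (fact (i+m) * fact (i-m)))"
    unfolding dsum_def n diff_Suc_1 ..
  also have "\<dots> = (-1)^(m-m) * Aco a b n m / (fact (m+m) * fact (m-m))
      + (-1)^(Suc m-m) * Aco a b n (Suc m) / (fact (Suc m+m) * fact (Suc m-m))"
  proof -
    have e: "{m..Suc m} = insert m {Suc m}" by auto
    show ?thesis unfolding e by (simp del: fact_Suc)
  qed
  also have "\<dots> = Aco a b n m / fact (2*m) - Aco a b n (Suc m) / fact (Suc (2*m))"
  proof -
    have h1: "m + m = 2*m" "Suc m + m = Suc (2*m)" "Suc m - m = 1" "m - m = 0" by simp_all
    show ?thesis unfolding h1 by (simp del: fact_Suc)
  qed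
  also have "Aco a b n m = P * (real m + a + 1) * H"
    unfolding Aco_def P_def H_def x_def n by simp
  also have "Aco a b n (Suc m) = P * (x + real m) * (H * (1/2 + real m))"
    unfolding Aco_def P_def H_def x_def n pochhammer_Suc by simp
  also have "(fact (Suc (2*m)) :: real) = (2 * real m + 1) * (c * H * F)"
    unfolding fact_Suc fact_double H_def F_def c_def by simp
  also have "(fact (2*m) :: real) = c * H * F"
    unfolding fact_double H_def F_def c_def by simp
  also have "P * (real m + a + 1) * H / (c * H * F) -
      P * (x + real m) * (H * (1/2 + real m)) / ((2 * real m + 1) * (c * H * F))
      = (a - b) * P / (2 * c * F)"
    unfolding xm by (rule alg_top1) (use H0 F0 c0 in auto)
  also have "P = Gamma (x + real m) / Gamma x"
    unfolding P_def by (rule pochhammer_Gamma[OF not_npi[OF x0]])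
  also have "x + real m = 2 * real n + a + b" unfolding x_def n by simp
  also have "F = Gamma (real n)" unfolding F_def n using Gamma_fact[of m, where 'a=real] by (simp add: add.commute)
  also have "2 * c = 2 ^ (2 * n - 1)" unfolding c_def n by simp
  also have "(a - b) * (Gamma (2 * real n + a + b) / Gamma x) / (2 ^ (2 * n - 1) * Gamma (real n))
     = (a - b) * Gamma (2 * real n + a + b) / (2 ^ (2 * n - 1) * Gamma x * Gamma (real n))"
    by (simp add: divide_divide_eq_left ac_simps)
  finally show ?thesis unfolding x_def .
qed

theorem mainTheorem2:
  fixes \<alpha> \<beta> :: real and n :: nat
  assumes "\<alpha> > -1" and "\<beta> > -1" and "n \<ge> 1"
  shows "(\<forall>k::nat. k + 2 \<le> n \<longrightarrow>
            dcoef \<alpha> \<beta> k n =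
              2 * (\<alpha> - \<beta>) * (real k + 1)
                / (real n * (real n + \<alpha> + \<beta> + 1) - (real k)^2 - (\<alpha> + \<beta> + 1) * real k)
                * dcoef \<alpha> \<beta> (k + 1) n
            + (real n * (real n + \<alpha> + \<beta> + 1) - (real k + 2)^2 + (\<alpha> + \<beta> + 1) * (real k + 2))
                / (real n * (real n + \<alpha> + \<beta> + 1) - (real k)^2 - (\<alpha> + \<beta> + 1) * real k)
                * dcoef \<alpha> \<beta> (k + 2) n)
       \<and> dcoef \<alpha> \<beta> n n =
           Gamma (2 * real n + \<alpha> + \<beta> + 1)
             / (2 ^ (2 * n) * Gamma (real n + \<alpha> + \<beta> + 1) * Gamma (real n + 1))
       \<and> dcoef \<alpha> \<beta> (n - 1) n =
           (\<alpha> - \<beta>) * Gamma (2 * real n + \<alpha> + \<beta>)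
             / (2 ^ (2 * n - 1) * Gamma (real n + \<alpha> + \<beta> + 1) * Gamma (real n))"
proof (intro conjI allI impI)
  fix k :: nat assume k: "k + 2 \<le> n"
  define D where "D = real n * (real n + \<alpha> + \<beta> + 1) - (real k)^2 - (\<alpha> + \<beta> + 1) * real k"
  define E where "E = real n * (real n + \<alpha> + \<beta> + 1) - (real k + 2)^2 + (\<alpha> + \<beta> + 1) * (real k + 2)"
  have D: "D = (real n - real k) * (real n + real k + \<alpha> + \<beta> + 1)"
    unfolding D_def by (simp add: algebra_simps power2_eq_square)
  have "real n - real k > 0" using k by simp
  moreover have "real n + real k + \<alpha> + \<beta> + 1 > 0" using assms k by simp
  ultimately have D0: "D \<noteq> 0" unfolding D by simp
  have k1: "k \<le> n" "k + 1 \<le> n" using k by auto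
  have r: "D * dcoef \<alpha> \<beta> k n = 2*(\<alpha>-\<beta>)*(real k+1) * dcoef \<alpha> \<beta> (k+1) n + E * dcoef \<alpha> \<beta> (k+2) n"
    unfolding D_def E_def dcoef_sum[OF assms(1) k1(1)] dcoef_sum[OF assms(1) k1(2)] dcoef_sum[OF assms(1) k]
    by (rule dsum_rec[OF assms(1) k])
  have eq: "dcoef \<alpha> \<beta> k n = 2 * (\<alpha> - \<beta>) * (real k + 1) / D * dcoef \<alpha> \<beta> (k + 1) n + E / D * dcoef \<alpha> \<beta> (k + 2) n"
    using r D0 by (simp add: field_simps)
  then show "dcoef \<alpha> \<beta> k n =
              2 * (\<alpha> - \<beta>) * (real k + 1)
                / (real n * (real n + \<alpha> + \<beta> + 1) - (real k)^2 - (\<alpha> + \<beta> + 1) * real k)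
                * dcoef \<alpha> \<beta> (k + 1) n
            + (real n * (real n + \<alpha> + \<beta> + 1) - (real k + 2)^2 + (\<alpha> + \<beta> + 1) * (real k + 2))
                / (real n * (real n + \<alpha> + \<beta> + 1) - (real k)^2 - (\<alpha> + \<beta> + 1) * real k)
                * dcoef \<alpha> \<beta> (k + 2) n"
    unfolding D_def E_def .
next
  show "dcoef \<alpha> \<beta> n n = Gamma (2 * real n + \<alpha> + \<beta> + 1)
             / (2 ^ (2 * n) * Gamma (real n + \<alpha> + \<beta> + 1) * Gamma (real n + 1))"
    unfolding dcoef_sum[OF assms(1) order_refl] by (rule dsum_top[OF assms])
next
  show "dcoef \<alpha> \<beta> (n - 1) n = (\<alpha> - \<beta>) * Gamma (2 * real n + \<alpha> + \<beta>)
             / (2 ^ (2 * n - 1) * Gamma (real n + \<alpha> + \<beta> + 1) * Gamma (real n))"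
    unfolding dcoef_sum[OF assms(1) diff_le_self] by (rule dsum_top1[OF assms])
qed

end
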